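(* Let $X$ be a random variable taking values in $[0,1]$ with law $P$, and let $\widehat X\in[0,1)$ be a nonrandom number. Then for every $\xi\in[-1,1]$, \[ \mathbb{E}_P\exp\left\{\xi\,(X-\mathbb{E}_P[X])-\xi^2\,\psi_E(|X-\widehat X|)\right\}\le 1 . \]
   Context: $\psi_E(x)=-\log(1-x)-x$ for $x\in[0,1)$, and $\psi_E(1):=+\infty$. Conventions: $0\cdot(+\infty)=0$ and $\exp(-\infty)=0$. *)

theory Defs
  imports "HOL-Probability.Probability"
begin

text \<open>psi_E(x) = -log(1-x) - x for x in [0,1), and psi_E(1) = +infinity.
  Extended-real valued; arguments outside [0,1] never occur in the statement.\<close>
definition psiE :: "real \<Rightarrow> ereal" where
  "psiE x = (if x < 1 then ereal (- ln (1 - x) - x) else PInfty)"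

text \<open>Exponential on the extended reals with exp(-infinity) = 0
  (the value at +infinity is irrelevant: it never occurs).\<close>
definition expE :: "ereal \<Rightarrow> real" where
  "expE e = (if e = MInfty then 0 else exp (real_of_ereal e))"

end

theory Submission
  imports Defs
begin

lemma psi_sums:
  fixes x :: real assumes "\<bar>x\<bar> < 1"
  shows "(\<lambda>n. x^(Suc (Suc n)) / real (Suc (Suc n))) sums (- ln (1 - x) - x)"
proof -
  have "(\<lambda>n. - ((-(-x))^n) / of_nat n) sums ln (1 + (-x))"
    by (rule ln_series') (use assms in simp)
  hence "(\<lambda>n. - (x^n / real n)) sums ln (1 - x)" by simp
  from sums_minus[OF this] have a: "(\<lambda>n. x^n / real n) sums (- ln (1 - x))"
    by simp
  have "(\<lambda>n. x^(Suc n) / real (Suc n)) sums (- ln (1 - x))"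
    using a sums_Suc_iff[of "\<lambda>n. x^n / real n"] by simp
  hence "(\<lambda>n. x^(Suc (Suc n)) / real (Suc (Suc n))) sums (- ln (1 - x) - x)"
    using sums_Suc_iff[of "\<lambda>n. x^(Suc n) / real (Suc n)" "- ln (1 - x) - x"] by simp
  thus ?thesis .
qed

lemma c6: fixes u :: real assumes "u \<ge> 0" shows "\<bar>(-u)^(Suc (Suc n))\<bar> = u^(Suc (Suc n))"
  by (metis power_abs abs_minus_cancel abs_of_nonneg assms)

lemma c3: fixes u :: real assumes "u \<ge> 0"
  shows "0 \<le> u^(Suc (Suc n)) / real (Suc (Suc n)) - (-u)^(Suc (Suc n)) / real (Suc (Suc n))"
proof -
  have "(-u)^(Suc (Suc n)) \<le> \<bar>(-u)^(Suc (Suc n))\<bar>" by (rule abs_ge_self)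
  hence "(-u)^(Suc (Suc n)) \<le> u^(Suc (Suc n))" unfolding c6[OF assms] .
  thus ?thesis by (simp add: divide_right_mono)
qed

lemma c2: fixes u :: real assumes "\<bar>u\<bar> < 1"
  shows "(\<lambda>n. (-u)^(Suc (Suc n)) / real (Suc (Suc n))) sums (- ln (1 + u) + u)"
  using psi_sums[of "-u"] assms by simp

lemma c1: fixes u :: real assumes "\<bar>u\<bar> < 1" "\<not> u \<ge> 0"
  shows "u - (- ln (1 - \<bar>u\<bar>) - \<bar>u\<bar>) \<le> ln (1 + u)"
  using assms by simp

lemma c4: fixes u :: real assumes "0 \<le> (- ln (1 - u) - u) - (- ln (1 + u) + u)" "u \<ge> 0"
  shows "u - (- ln (1 - \<bar>u\<bar>) - \<bar>u\<bar>) \<le> ln (1 + u)"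
  using assms by simp

lemma lnA:
  fixes u :: real assumes "\<bar>u\<bar> < 1"
  shows "u - (- ln (1 - \<bar>u\<bar>) - \<bar>u\<bar>) \<le> ln (1 + u)"
proof (cases "u \<ge> 0")
  case False thus ?thesis using c1 assms by blast
next
  case True
  have d: "(\<lambda>n. u^(Suc (Suc n)) / real (Suc (Suc n)) - (-u)^(Suc (Suc n)) / real (Suc (Suc n)))
     sums ((- ln (1 - u) - u) - (- ln (1 + u) + u))"
    by (rule sums_diff[OF psi_sums[OF assms] c2[OF assms]])
  have "0 \<le> (- ln (1 - u) - u) - (- ln (1 + u) + u)"
    by (rule sums_le[OF c3[OF True] sums_zero d])
  thus ?thesis using True by (rule c4)
qed

lemma psiB:
  fixes t s :: real assumes "0 \<le> t" "t \<le> 1" "0 \<le> s" "s < 1"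
  shows "- ln (1 - t * s) - t * s \<le> t^2 * (- ln (1 - s) - s)"
proof -
  have "t * s \<le> 1 * s" using assms by (intro mult_right_mono) auto
  hence ts: "\<bar>t * s\<bar> < 1" using assms by simp
  have s1: "(\<lambda>n. (t * s)^(Suc (Suc n)) / real (Suc (Suc n))) sums (- ln (1 - t * s) - t * s)"
    using psi_sums[OF ts] .
  have s2: "(\<lambda>n. t^2 * (s^(Suc (Suc n)) / real (Suc (Suc n)))) sums (t^2 * (- ln (1 - s) - s))"
    using psi_sums[of s] assms by (intro sums_mult) simp
  have le: "\<And>n. (t * s)^(Suc (Suc n)) / real (Suc (Suc n)) \<le> t^2 * (s^(Suc (Suc n)) / real (Suc (Suc n)))"
  proof -
    fix n
    have "t^n \<le> 1" using assms by (simp add: power_le_one)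
    hence "t^2 * t^n \<le> t^2 * 1" using assms by (intro mult_left_mono) auto
    hence "t^(Suc (Suc n)) \<le> t^2" by (simp add: power2_eq_square)
    hence "t^(Suc (Suc n)) * s^(Suc (Suc n)) \<le> t^2 * s^(Suc (Suc n))"
      using assms by (intro mult_right_mono) auto
    thus "(t * s)^(Suc (Suc n)) / real (Suc (Suc n)) \<le> t^2 * (s^(Suc (Suc n)) / real (Suc (Suc n)))"
      by (metis power_mult_distrib divide_right_mono of_nat_0_le_iff times_divide_eq_right)
  qed
  show ?thesis by (rule sums_le[OF le s1 s2])
qed


lemma pointwise:
  fixes x m h xi :: real
  assumes "-1 < x - h" "x - h \<le> 1" "-1 \<le> xi" "xi \<le> 1"
  shows "expE (ereal (xi * (x - m)) - ereal (xi\<^sup>2) * psiE \<bar>x - h\<bar>) \<le> (1 + xi * (x - h)) * exp (- xi * (m - h))"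
proof (cases "x - h < 1")
  case True
  define y where "y = x - h"
  define p where "p = - ln (1 - \<bar>y\<bar>) - \<bar>y\<bar>"
  have ay: "\<bar>y\<bar> < 1" using True assms y_def by auto
  have ps: "psiE \<bar>x - h\<bar> = ereal p" using ay unfolding psiE_def p_def y_def by simp
  have e: "expE (ereal (xi * (x - m)) - ereal (xi\<^sup>2) * psiE \<bar>x - h\<bar>) = exp (xi * (x - m) - xi\<^sup>2 * p)"
    unfolding ps expE_def by simp
  define u where "u = xi * y"
  have au: "\<bar>u\<bar> = \<bar>xi\<bar> * \<bar>y\<bar>" unfolding u_def by (simp add: abs_mult)
  have "\<bar>xi\<bar> * \<bar>y\<bar> \<le> 1 * \<bar>y\<bar>" using assms by (intro mult_right_mono) auto
  hence au1: "\<bar>u\<bar> < 1" using au ay by simp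
  have A: "u - (- ln (1 - \<bar>u\<bar>) - \<bar>u\<bar>) \<le> ln (1 + u)" using lnA[OF au1] .
  have B: "- ln (1 - \<bar>xi\<bar> * \<bar>y\<bar>) - \<bar>xi\<bar> * \<bar>y\<bar> \<le> \<bar>xi\<bar>^2 * p"
    unfolding p_def using assms ay by (intro psiB) auto
  have pos: "0 < 1 + u" using au1 by linarith
  have "u - xi\<^sup>2 * p \<le> ln (1 + u)" using A B au by simp
  hence "exp (u - xi\<^sup>2 * p) \<le> 1 + u" using pos by (metis exp_le_cancel_iff exp_ln)
  hence le: "exp (u - xi\<^sup>2 * p) * exp (- xi * (m - h)) \<le> (1 + u) * exp (- xi * (m - h))"
    by (intro mult_right_mono) auto
  have eq: "exp (u - xi\<^sup>2 * p) * exp (- xi * (m - h)) = exp (xi * (x - m) - xi\<^sup>2 * p)"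
    unfolding u_def y_def by (simp add: exp_add[symmetric] algebra_simps)
  have G: "exp (xi * (x - m) - xi\<^sup>2 * p) \<le> (1 + u) * exp (- xi * (m - h))"
    using le unfolding eq .
  show ?thesis unfolding e using G unfolding u_def y_def .
next
  case False
  hence x1: "x - h = 1" using assms by simp
  hence ps: "psiE \<bar>x - h\<bar> = PInfty" unfolding psiE_def by simp
  show ?thesis
  proof (cases "xi = 0")
    case True thus ?thesis using ps by (simp add: expE_def)
  next
    case False
    hence "xi\<^sup>2 > 0" by simp
    hence "ereal (xi\<^sup>2) * psiE \<bar>x - h\<bar> = PInfty" using ps by simp
    hence "expE (ereal (xi * (x - m)) - ereal (xi\<^sup>2) * psiE \<bar>x - h\<bar>) = 0"
      by (simp add: expE_def)
    moreover have "0 \<le> (1 + xi * (x - h)) * exp (- xi * (m - h))" using x1 assms by simp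
    ultimately show ?thesis by simp
  qed
qed

theorem mainTheorem2:
  fixes M :: "'a measure" and X :: "'a \<Rightarrow> real" and Xhat \<xi> :: real
  assumes "prob_space M"
    and "X \<in> borel_measurable M"
    and "\<And>\<omega>. \<omega> \<in> space M \<Longrightarrow> 0 \<le> X \<omega> \<and> X \<omega> \<le> 1"
    and "0 \<le> Xhat" and "Xhat < 1"
    and "-1 \<le> \<xi>" and "\<xi> \<le> 1"
  shows "(\<integral>\<omega>. expE (ereal (\<xi> * (X \<omega> - (\<integral>\<omega>'. X \<omega>' \<partial>M)))
                        - ereal (\<xi>\<^sup>2) * psiE \<bar>X \<omega> - Xhat\<bar>) \<partial>M) \<le> 1"
proof -
  interpret prob_space M by fact
  define m where "m = (\<integral>\<omega>. X \<omega> \<partial>M)"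
  have iX: "integrable M X"
    using assms(2,3) by (intro integrable_const_bound[where B=1]) auto
  define F where "F = (\<lambda>\<omega>. (1 + \<xi> * (X \<omega> - Xhat)) * exp (- \<xi> * (m - Xhat)))"
  have i1: "integrable M (\<lambda>x. 1 + \<xi> * (X x - Xhat))"
    using iX by (intro Bochner_Integration.integrable_add Bochner_Integration.integrable_mult_right Bochner_Integration.integrable_diff) auto
  have iF: "integrable M F" unfolding F_def using i1 by (intro Bochner_Integration.integrable_mult_left) simp
  have "(\<integral>\<omega>. expE (ereal (\<xi> * (X \<omega> - m)) - ereal (\<xi>\<^sup>2) * psiE \<bar>X \<omega> - Xhat\<bar>) \<partial>M)
        \<le> (\<integral>\<omega>. F \<omega> \<partial>M)"
  proof (rule integral_mono'[OF iF])
    fix \<omega> assume w: "\<omega> \<in> space M"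
    have y1: "-1 < X \<omega> - Xhat" and y2: "X \<omega> - Xhat \<le> 1" using assms(3)[OF w] assms(4,5) by auto
    show "expE (ereal (\<xi> * (X \<omega> - m)) - ereal (\<xi>\<^sup>2) * psiE \<bar>X \<omega> - Xhat\<bar>) \<le> F \<omega>"
      unfolding F_def using y1 y2 assms(6,7) by (rule pointwise)
    have "\<bar>\<xi>\<bar> * \<bar>X \<omega> - Xhat\<bar> \<le> 1" using y1 y2 assms(6,7) by (intro mult_le_one) auto
    hence "\<bar>\<xi> * (X \<omega> - Xhat)\<bar> \<le> 1" by (simp add: abs_mult)
    hence "0 \<le> 1 + \<xi> * (X \<omega> - Xhat)" by linarith
    thus "0 \<le> F \<omega>" unfolding F_def by simp
  qed
  also have "(\<integral>\<omega>. F \<omega> \<partial>M) = (1 + \<xi> * (m - Xhat)) * exp (- \<xi> * (m - Xhat))"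
    unfolding F_def using iX by (simp add: m_def prob_space algebra_simps)
  also have "\<dots> \<le> 1"
  proof -
    have "1 + \<xi> * (m - Xhat) \<le> exp (\<xi> * (m - Xhat))" by (rule exp_ge_add_one_self)
    hence "(1 + \<xi> * (m - Xhat)) * exp (- \<xi> * (m - Xhat)) \<le> exp (\<xi> * (m - Xhat)) * exp (- \<xi> * (m - Xhat))"
      by (intro mult_right_mono) auto
    also have "\<dots> = 1" by (simp add: exp_add[symmetric])
    finally show ?thesis .
  qed
  finally show ?thesis unfolding m_def .
qed

end
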